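(* In the setting below, for each $\nu>0$ and $N\in\mathbb N$, $$\mathbb E\Big[\sup_{v\in V_0}\|g(Bv)-\hat g_N(Bv)\|_H\Big]=\mathbb E\Big[\sup_{w\in B(V_0)}\|g(w)-\hat g_N(w)\|_H\Big]\le 2L\nu+\frac{\sqrt3\,\tau_{\mathsf G}}{\sqrt N}\big(\mathcal N(\nu;B(V_0))\big)^{1/2}.$$
   Context: Let $(\Theta,\Sigma,\mu)$ be a complete probability space, $\boldsymbol\zeta$ a $\Theta$-valued random element, and $\boldsymbol\zeta^1,\boldsymbol\zeta^2,\ldots$ independent $\Theta$-valued random elements on a complete probability space, each distributed as $\boldsymbol\zeta$. Let $V$ be a reflexive Banach space, $V_0\subset V$ nonempty, closed, bounded and convex, $W$ a Banach space, and $B:V\to W$ linear and compact. Let $H$ be a separable Hilbert space and $\mathsf G:B(V_0)\times\Theta\to H$ a Carathéodory function (continuous in the first argument, measurable in the second). Assume there is an integrable $L_{\mathsf G}:\Theta\to[0,\infty)$ such that $\mathsf G(\cdot,\zeta)$ is Lipschitz continuous on $B(V_0)$ (w.r.t. $\|\cdot\|_W$) with constant $L_{\mathsf G}(\zeta)$ for each $\zeta\in\Theta$, and there is $\tau_{\mathsf G}>0$ with $\mathbb E[\exp(\tau_{\mathsf G}^{-2}\|\mathsf G(w,\boldsymbol\zeta)-\mathbb E[\mathsf G(w,\boldsymbol\zeta)]\|_H^2)]\le e$ for all $w\in B(V_0)$. Define $g(w)=\mathbb E[\mathsf G(w,\boldsymbol\zeta)]$, $\hat g_N(w)=\frac1N\sum_{i=1}^N\mathsf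 G(w,\boldsymbol\zeta^i)$, and $L=\mathbb E[L_{\mathsf G}(\boldsymbol\zeta)]$. For $\nu>0$, $\mathcal N(\nu;B(V_0))$ denotes the minimal number of points in a $\nu$-net (in $\|\cdot\|_W$) of the set $B(V_0)$. *)

theory Defs
  imports "HOL-Analysis.Analysis" "HOL-Probability.Probability"
begin

definition reflexive_space :: "'v::banach itself \<Rightarrow> bool" where
  "reflexive_space _ \<longleftrightarrow>
     (\<forall>\<phi> :: ('v \<Rightarrow>\<^sub>L real) \<Rightarrow>\<^sub>L real. \<exists>v::'v. \<forall>f. blinfun_apply \<phi> f = blinfun_apply f v)"

definition compact_linear_op :: "('v::real_normed_vector \<Rightarrow> 'w::real_normed_vector) \<Rightarrow> bool" where
  "compact_linear_op B \<longleftrightarrow> bounded_linear B \<and> compact (closure (B ` cball 0 1))"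

definition covering_number :: "real \<Rightarrow> 'a::metric_space set \<Rightarrow> nat" where
  "covering_number \<nu> S =
     (LEAST n. \<exists>C. C \<subseteq> S \<and> finite C \<and> card C = n \<and> S \<subseteq> (\<Union>c\<in>C. cball c \<nu>))"

end

theory Submission
  imports Defs
begin

lemma tb_subset:
  fixes S T :: "'a::metric_space set"
  assumes "compact T" "S \<subseteq> T" "e > 0"
  shows "\<exists>C. finite C \<and> C \<subseteq> S \<and> S \<subseteq> (\<Union>c\<in>C. cball c e)"
proof -
  have "\<exists>k. finite k \<and> k \<subseteq> T \<and> T \<subseteq> (\<Union>x\<in>k. ball x (e/2))"
    using seq_compact_imp_totally_bounded[OF compact_imp_seq_compact[OF assms(1)]] assms(3)
    by (meson half_gt_zero)
  then obtain k where k: "finite k" "k \<subseteq> T" "T \<subseteq> (\<Union>x\<in>k. ball x (e/2))" by blast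
  define k' where "k' = {x\<in>k. ball x (e/2) \<inter> S \<noteq> {}}"
  have "\<forall>x\<in>k'. \<exists>y. y \<in> ball x (e/2) \<inter> S" unfolding k'_def by blast
  then obtain f where f: "\<And>x. x \<in> k' \<Longrightarrow> f x \<in> ball x (e/2) \<inter> S" by metis
  show ?thesis
  proof (intro exI conjI)
    show "finite (f ` k')" using k(1) unfolding k'_def by auto
    show "f ` k' \<subseteq> S" using f by auto
    show "S \<subseteq> (\<Union>c\<in>f ` k'. cball c e)"
    proof
      fix s assume s: "s \<in> S"
      then obtain x where x: "x \<in> k" "s \<in> ball x (e/2)" using k(3) assms(2) by blast
      then have xk: "x \<in> k'" unfolding k'_def using s by blast
      have "dist (f x) s \<le> dist (f x) x + dist x s" by (rule dist_triangle)
      also have "\<dots> < e" using f[OF xk] x(2) by (auto simp: dist_commute)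
      finally show "s \<in> (\<Union>c\<in>f ` k'. cball c e)" using xk by force
    qed
  qed
qed

lemma integrable_norm_h:
  fixes f :: "'a \<Rightarrow> 'h::{real_normed_vector, second_countable_topology}"
  assumes "integrable M f"
  shows "integrable M (\<lambda>x. norm (f x))"
proof (rule integrableI_nonneg)
  show "(\<lambda>x. norm (f x)) \<in> borel_measurable M" using assms by measurable
  show "AE x in M. 0 \<le> norm (f x)" by simp
  show "(\<integral>\<^sup>+x. ennreal (norm (f x)) \<partial>M) < \<infinity>"
    using assms has_bochner_integral_implies_finite_norm integrable.simps by metis
qed

lemma indep_orth:
  fixes u :: "'t \<Rightarrow> 'h::{real_inner, second_countable_topology}"
  assumes P: "prob_space P" and M: "prob_space M"
    and X: "X \<in> measurable P M" and Y: "Y \<in> measurable P M"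
    and ind: "prob_space.indep_var P M X M Y"
    and dX: "distr P M X = M" and dY: "distr P M Y = M"
    and u[measurable]: "u \<in> borel_measurable M" and ui: "integrable M (\<lambda>x. norm (u x))"
    and z: "\<And>a. (\<integral>x. inner a (u x) \<partial>M) = 0"
  shows "(\<integral>\<omega>. inner (u (X \<omega>)) (u (Y \<omega>)) \<partial>P) = 0"
proof -
  interpret P: prob_space P by fact
  interpret M: prob_space M by fact
  interpret MM: pair_prob_space M M by unfold_locales
  have D: "distr P (M \<Otimes>\<^sub>M M) (\<lambda>\<omega>. (X \<omega>, Y \<omega>)) = M \<Otimes>\<^sub>M M"
    using ind dX dY P.indep_var_distribution_eq by metis
  define h where "h = (\<lambda>z. inner (u (fst z)) (u (snd z)))"
  have hm[measurable]: "h \<in> borel_measurable (M \<Otimes>\<^sub>M M)" unfolding h_def by measurable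
  have am: "(\<lambda>y. ennreal (norm (u y))) \<in> borel_measurable M" by measurable
  define I where "I = (\<integral>\<^sup>+x. ennreal (norm (u x)) \<partial>M)"
  have I: "I < \<infinity>" unfolding I_def
    using nn_integral_eq_integral[OF ui] by simp
  have "(\<integral>\<^sup>+z. ennreal (norm (h z)) \<partial>(M \<Otimes>\<^sub>M M))
      \<le> (\<integral>\<^sup>+z. ennreal (norm (u (fst z))) * ennreal (norm (u (snd z))) \<partial>(M \<Otimes>\<^sub>M M))"
    by (rule nn_integral_mono) (simp add: h_def Cauchy_Schwarz_ineq2 flip: ennreal_mult)
  also have "\<dots> = (\<integral>\<^sup>+x. \<integral>\<^sup>+y. ennreal (norm (u x)) * ennreal (norm (u y)) \<partial>M \<partial>M)"
    using M.nn_integral_fst[where f="\<lambda>z. ennreal (norm (u (fst z))) * ennreal (norm (u (snd z)))"] by simp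
  also have "\<dots> = (\<integral>\<^sup>+x. ennreal (norm (u x)) * I \<partial>M)"
    by (rule nn_integral_cong) (simp only: I_def nn_integral_cmult[OF am])
  also have "\<dots> = I * I"
    by (simp only: nn_integral_multc[OF am]) (simp only: I_def)
  also have "\<dots> < \<infinity>" using I by (simp add: ennreal_mult_less_top)
  finally have hi: "integrable (M \<Otimes>\<^sub>M M) h"
    unfolding integrable_iff_bounded using hm by simp
  have "(\<integral>\<omega>. inner (u (X \<omega>)) (u (Y \<omega>)) \<partial>P) = integral\<^sup>L (distr P (M \<Otimes>\<^sub>M M) (\<lambda>\<omega>. (X \<omega>, Y \<omega>))) h"
    using measurable_Pair[OF X Y] by (subst integral_distr) (auto simp: h_def)
  also have "\<dots> = integral\<^sup>L (M \<Otimes>\<^sub>M M) h" using D by simp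
  also have "\<dots> = (\<integral>x. (\<integral>y. h (x,y) \<partial>M) \<partial>M)" using MM.integral_fst'[OF hi] by simp
  also have "\<dots> = 0" by (simp add: h_def z)
  finally show ?thesis .
qed

lemma var_sum:
  fixes Z :: "nat \<Rightarrow> 'o \<Rightarrow> 'h::{real_inner, second_countable_topology}"
  assumes fin: "finite I"
   and Zm[measurable]: "\<And>i. i\<in>I \<Longrightarrow> Z i \<in> borel_measurable P"
   and sq: "\<And>i. i\<in>I \<Longrightarrow> integrable P (\<lambda>\<omega>. (norm (Z i \<omega>))\<^sup>2)"
   and orth: "\<And>i j. i\<in>I \<Longrightarrow> j\<in>I \<Longrightarrow> i\<noteq>j \<Longrightarrow> (\<integral>\<omega>. inner (Z i \<omega>) (Z j \<omega>) \<partial>P) = 0"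
  shows "integrable P (\<lambda>\<omega>. (norm (\<Sum>i\<in>I. Z i \<omega>))\<^sup>2)
     \<and> (\<integral>\<omega>. (norm (\<Sum>i\<in>I. Z i \<omega>))\<^sup>2 \<partial>P) = (\<Sum>i\<in>I. \<integral>\<omega>. (norm (Z i \<omega>))\<^sup>2 \<partial>P)"
proof -
  have eq: "(norm (\<Sum>i\<in>I. Z i \<omega>))\<^sup>2 = (\<Sum>i\<in>I. \<Sum>j\<in>I. inner (Z i \<omega>) (Z j \<omega>))" for \<omega>
    by (simp only: power2_norm_eq_inner inner_sum_left) (simp only: inner_sum_right)
  have ab: "x * y \<le> x\<^sup>2 + y\<^sup>2" if "0 \<le> x" "0 \<le> y" for x y :: real
  proof -
    have "0 \<le> (x - y)\<^sup>2" by simp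
    then have "2 * (x * y) \<le> x\<^sup>2 + y\<^sup>2" by (simp add: power2_diff)
    moreover have "0 \<le> x * y" using that by simp
    ultimately show ?thesis by linarith
  qed
  have ii: "integrable P (\<lambda>\<omega>. inner (Z i \<omega>) (Z j \<omega>))" if "i \<in> I" "j \<in> I" for i j
  proof (rule Bochner_Integration.integrable_bound[where f="\<lambda>\<omega>. (norm (Z i \<omega>))\<^sup>2 + (norm (Z j \<omega>))\<^sup>2"])
    show "integrable P (\<lambda>\<omega>. (norm (Z i \<omega>))\<^sup>2 + (norm (Z j \<omega>))\<^sup>2)"
      using sq[OF that(1)] sq[OF that(2)] by (rule Bochner_Integration.integrable_add)
    show "(\<lambda>\<omega>. inner (Z i \<omega>) (Z j \<omega>)) \<in> borel_measurable P"
      using Zm[OF that(1)] Zm[OF that(2)] by (rule borel_measurable_inner)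
    show "AE \<omega> in P. norm (inner (Z i \<omega>) (Z j \<omega>)) \<le> norm ((norm (Z i \<omega>))\<^sup>2 + (norm (Z j \<omega>))\<^sup>2)"
    proof (rule AE_I2)
      fix \<omega>
      have "\<bar>inner (Z i \<omega>) (Z j \<omega>)\<bar> \<le> norm (Z i \<omega>) * norm (Z j \<omega>)" by (rule Cauchy_Schwarz_ineq2)
      also have "\<dots> \<le> (norm (Z i \<omega>))\<^sup>2 + (norm (Z j \<omega>))\<^sup>2"
        by (rule ab) simp_all
      finally show "norm (inner (Z i \<omega>) (Z j \<omega>)) \<le> norm ((norm (Z i \<omega>))\<^sup>2 + (norm (Z j \<omega>))\<^sup>2)"
        by simp
    qed
  qed
  have ii2: "integrable P (\<lambda>\<omega>. \<Sum>j\<in>I. inner (Z i \<omega>) (Z j \<omega>))" if "i \<in> I" for i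
    by (rule Bochner_Integration.integrable_sum) (rule ii[OF that])
  have "integrable P (\<lambda>\<omega>. \<Sum>i\<in>I. \<Sum>j\<in>I. inner (Z i \<omega>) (Z j \<omega>))"
    by (rule Bochner_Integration.integrable_sum) (rule ii2)
  then have A: "integrable P (\<lambda>\<omega>. (norm (\<Sum>i\<in>I. Z i \<omega>))\<^sup>2)" unfolding eq .
  have "(\<integral>\<omega>. (norm (\<Sum>i\<in>I. Z i \<omega>))\<^sup>2 \<partial>P) = (\<integral>\<omega>. (\<Sum>i\<in>I. \<Sum>j\<in>I. inner (Z i \<omega>) (Z j \<omega>)) \<partial>P)"
    unfolding eq ..
  also have "\<dots> = (\<Sum>i\<in>I. \<integral>\<omega>. (\<Sum>j\<in>I. inner (Z i \<omega>) (Z j \<omega>)) \<partial>P)"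
    by (rule Bochner_Integration.integral_sum) (rule ii2)
  also have "\<dots> = (\<Sum>i\<in>I. \<Sum>j\<in>I. \<integral>\<omega>. inner (Z i \<omega>) (Z j \<omega>) \<partial>P)"
    by (intro sum.cong refl Bochner_Integration.integral_sum ii)
  also have "\<dots> = (\<Sum>i\<in>I. \<Sum>j\<in>I. if j = i then \<integral>\<omega>. (norm (Z i \<omega>))\<^sup>2 \<partial>P else 0)"
    by (intro sum.cong refl) (simp add: orth power2_norm_eq_inner)
  also have "\<dots> = (\<Sum>i\<in>I. \<integral>\<omega>. (norm (Z i \<omega>))\<^sup>2 \<partial>P)"
    using fin by (simp add: sum.delta)
  finally show ?thesis using A by simp
qed

lemma indep_pair:
  assumes P: "prob_space P" and ind: "prob_space.indep_vars P (\<lambda>_. M) Z I"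
    and ij: "i \<in> I" "j \<in> I" "i \<noteq> j"
  shows "prob_space.indep_var P M (Z i) M (Z j)"
proof -
  interpret prob_space P by fact
  have "indep_var (PiM {i} (\<lambda>_. M)) (\<lambda>\<omega>. restrict (\<lambda>k. Z k \<omega>) {i}) (PiM {j} (\<lambda>_. M)) (\<lambda>\<omega>. restrict (\<lambda>k. Z k \<omega>) {j})"
    using ij by (intro indep_var_restrict[OF ind]) auto
  then have "indep_var M ((\<lambda>f. f i) \<circ> (\<lambda>\<omega>. restrict (\<lambda>k. Z k \<omega>) {i})) M ((\<lambda>f. f j) \<circ> (\<lambda>\<omega>. restrict (\<lambda>k. Z k \<omega>) {j}))"
    by (rule indep_var_compose) (auto intro: measurable_component_singleton)
  then show ?thesis by (simp add: comp_def)
qed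

lemma transfer_real:
  fixes h :: "'t \<Rightarrow> real"
  assumes X: "X \<in> measurable P M" and Y: "Y \<in> measurable P M"
    and d: "distr P M X = distr P M Y" and h: "h \<in> borel_measurable M"
  shows "integrable P (\<lambda>\<omega>. h (X \<omega>)) = integrable P (\<lambda>\<omega>. h (Y \<omega>))"
    and "(\<integral>\<omega>. h (X \<omega>) \<partial>P) = (\<integral>\<omega>. h (Y \<omega>) \<partial>P)"
proof -
  show "integrable P (\<lambda>\<omega>. h (X \<omega>)) = integrable P (\<lambda>\<omega>. h (Y \<omega>))"
    using integrable_distr_eq[OF X h] integrable_distr_eq[OF Y h] d by simp
  show "(\<integral>\<omega>. h (X \<omega>) \<partial>P) = (\<integral>\<omega>. h (Y \<omega>) \<partial>P)"
    using integral_distr[OF X h] integral_distr[OF Y h] d by simp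
qed



theorem propositionA2:
  fixes \<mu> :: "'t measure"
    and P :: "'o measure"
    and \<zeta> :: "'o \<Rightarrow> 't"
    and \<zeta>s :: "nat \<Rightarrow> 'o \<Rightarrow> 't"
    and V0 :: "'v::banach set"
    and B :: "'v \<Rightarrow> 'w::banach"
    and G :: "'w \<Rightarrow> 't \<Rightarrow> 'h::{real_inner, complete_space, second_countable_topology}"
    and LG :: "'t \<Rightarrow> real"
    and \<tau> \<nu> :: real
    and N :: nat
  assumes mu: "prob_space \<mu>" "complete_measure \<mu>"
    and P: "prob_space P" "complete_measure P"
    and zeta: "\<zeta> \<in> measurable P \<mu>"
    and zetas: "\<And>i. \<zeta>s i \<in> measurable P \<mu>"
    and zeta_law: "distr P \<mu> \<zeta> = \<mu>"
    and zetas_dist: "\<And>i. distr P \<mu> (\<zeta>s i) = distr P \<mu> \<zeta>"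
    and zetas_indep: "prob_space.indep_vars P (\<lambda>_. \<mu>) \<zeta>s {1..}"
    and refl: "reflexive_space TYPE('v)"
    and V0: "V0 \<noteq> {}" "closed V0" "bounded V0" "convex V0"
    and B: "compact_linear_op B"
    and G_cont: "\<And>\<theta>. \<theta> \<in> space \<mu> \<Longrightarrow> continuous_on (B ` V0) (\<lambda>w. G w \<theta>)"
    and G_meas: "\<And>w. w \<in> B ` V0 \<Longrightarrow> (\<lambda>\<theta>. G w \<theta>) \<in> borel_measurable \<mu>"
    and LG_nonneg: "\<And>\<theta>. \<theta> \<in> space \<mu> \<Longrightarrow> 0 \<le> LG \<theta>"
    and LG_int: "integrable P (\<lambda>\<omega>. LG (\<zeta> \<omega>))"
    and G_lip: "\<And>\<theta> w w'. \<theta> \<in> space \<mu> \<Longrightarrow> w \<in> B ` V0 \<Longrightarrow> w' \<in> B ` V0 \<Longrightarrow>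
                  norm (G w \<theta> - G w' \<theta>) \<le> LG \<theta> * norm (w - w')"
    and G_int: "\<And>w. w \<in> B ` V0 \<Longrightarrow> integrable P (\<lambda>\<omega>. G w (\<zeta> \<omega>))"
    and tau: "\<tau> > 0"
    and G_subgauss: "\<And>w. w \<in> B ` V0 \<Longrightarrow>
          (\<integral>\<^sup>+ \<omega>. ennreal (exp ((norm (G w (\<zeta> \<omega>) - (\<integral>\<omega>'. G w (\<zeta> \<omega>') \<partial>P)))\<^sup>2 / \<tau>\<^sup>2)) \<partial>P)
            \<le> ennreal (exp 1)"
    and nu: "\<nu> > 0"
    and N: "N > 0"
  shows "(\<integral>\<^sup>+ \<omega>. (SUP v\<in>V0. ennreal (norm ((\<integral>\<omega>'. G (B v) (\<zeta> \<omega>') \<partial>P)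
                       - (\<Sum>i=1..N. G (B v) (\<zeta>s i \<omega>)) /\<^sub>R real N))) \<partial>P)
       = (\<integral>\<^sup>+ \<omega>. (SUP w\<in>B ` V0. ennreal (norm ((\<integral>\<omega>'. G w (\<zeta> \<omega>') \<partial>P)
                       - (\<Sum>i=1..N. G w (\<zeta>s i \<omega>)) /\<^sub>R real N))) \<partial>P)
     \<and> (\<integral>\<^sup>+ \<omega>. (SUP w\<in>B ` V0. ennreal (norm ((\<integral>\<omega>'. G w (\<zeta> \<omega>') \<partial>P)
                       - (\<Sum>i=1..N. G w (\<zeta>s i \<omega>)) /\<^sub>R real N))) \<partial>P)
       \<le> ennreal (2 * (\<integral>\<omega>. LG (\<zeta> \<omega>) \<partial>P) * \<nu>
                  + sqrt 3 * \<tau> / sqrt (real N) * sqrt (real (covering_number \<nu> (B ` V0))))"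
proof -
  interpret P: prob_space P by (rule P(1))
  interpret mu: prob_space \<mu> by (rule mu(1))
  define S where "S = B ` V0"
  define g where "g = (\<lambda>w. \<integral>\<omega>. G w (\<zeta> \<omega>) \<partial>P)"
  define gh where "gh = (\<lambda>w \<omega>. (\<Sum>i=1..N. G w (\<zeta>s i \<omega>)) /\<^sub>R real N)"
  define X where "X = (\<lambda>w \<omega>. norm (g w - gh w \<omega>))"
  define L where "L = (\<integral>\<omega>. LG (\<zeta> \<omega>) \<partial>P)"
  have law: "\<And>i. distr P \<mu> (\<zeta>s i) = \<mu>" using zetas_dist zeta_law by simp
  have GmS: "\<And>w. w \<in> S \<Longrightarrow> (\<lambda>\<theta>. G w \<theta>) \<in> borel_measurable \<mu>" using G_meas S_def by simp
  have GiS: "\<And>w. w \<in> S \<Longrightarrow> integrable P (\<lambda>\<omega>. G w (\<zeta> \<omega>))" using G_int S_def by simp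
  have lipS: "\<And>\<theta> w w'. \<theta> \<in> space \<mu> \<Longrightarrow> w \<in> S \<Longrightarrow> w' \<in> S \<Longrightarrow>
                  norm (G w \<theta> - G w' \<theta>) \<le> LG \<theta> * norm (w - w')" using G_lip S_def by simp
  have zsp: "\<And>\<omega>. \<omega> \<in> space P \<Longrightarrow> \<zeta> \<omega> \<in> space \<mu>" using zeta measurable_space by metis
  have zssp: "\<And>i \<omega>. \<omega> \<in> space P \<Longrightarrow> \<zeta>s i \<omega> \<in> space \<mu>" using zetas measurable_space by metis

  have part1: "(\<integral>\<^sup>+ \<omega>. (SUP v\<in>V0. ennreal (norm ((\<integral>\<omega>'. G (B v) (\<zeta> \<omega>') \<partial>P)
                       - (\<Sum>i=1..N. G (B v) (\<zeta>s i \<omega>)) /\<^sub>R real N))) \<partial>P)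
       = (\<integral>\<^sup>+ \<omega>. (SUP w\<in>B ` V0. ennreal (norm ((\<integral>\<omega>'. G w (\<zeta> \<omega>') \<partial>P)
                       - (\<Sum>i=1..N. G w (\<zeta>s i \<omega>)) /\<^sub>R real N))) \<partial>P)"
    by (simp add: image_image)

  have Blin: "bounded_linear B" and cpt: "compact (closure (B ` cball 0 1))"
    using B unfolding compact_linear_op_def by auto
  have Bsc: "\<And>r x. B (r *\<^sub>R x) = r *\<^sub>R B x"
    using bounded_linear.linear[OF Blin] unfolding linear_iff by blast
  obtain R where R: "R > 0" "\<And>v. v \<in> V0 \<Longrightarrow> norm v \<le> R"
    using V0(3) unfolding bounded_pos by blast
  define T where "T = (\<lambda>x. R *\<^sub>R x) ` closure (B ` cball 0 1)"
  have Tc: "compact T" unfolding T_def using cpt by (rule compact_scaling)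
  have ST: "S \<subseteq> T"
  proof
    fix y assume "y \<in> S"
    then obtain v where v: "v \<in> V0" "y = B v" unfolding S_def by auto
    have nv: "norm v \<le> R" by (rule R(2)[OF v(1)])
    have "norm ((1/R) *\<^sub>R v) = norm v / R" using R(1) by simp
    also have "\<dots> \<le> 1" using nv R(1) by simp
    finally have "(1/R) *\<^sub>R v \<in> cball 0 1" by simp
    then have "B ((1/R) *\<^sub>R v) \<in> B ` cball 0 1" by (rule imageI)
    then have z: "B ((1/R) *\<^sub>R v) \<in> closure (B ` cball 0 1)" using closure_subset by (rule subsetD[rotated])
    have "y = R *\<^sub>R B ((1/R) *\<^sub>R v)"
      using v(2) R(1) by (simp add: Bsc)
    then show "y \<in> T" unfolding T_def using z by (rule image_eqI)
  qed
  have nets: "\<And>e. e > 0 \<Longrightarrow> \<exists>C. finite C \<and> C \<subseteq> S \<and> S \<subseteq> (\<Union>c\<in>C. cball c e)"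
    using tb_subset[OF Tc ST] by blast
  have Sne: "S \<noteq> {}" using V0(1) S_def by auto

  obtain C where C: "C \<subseteq> S" "finite C" "card C = covering_number \<nu> S" "S \<subseteq> (\<Union>c\<in>C. cball c \<nu>)"
  proof -
    have "\<exists>n C. C \<subseteq> S \<and> finite C \<and> card C = n \<and> S \<subseteq> (\<Union>c\<in>C. cball c \<nu>)"
      using nets[OF nu] by blast
    then have "\<exists>C. C \<subseteq> S \<and> finite C \<and> card C = covering_number \<nu> S \<and> S \<subseteq> (\<Union>c\<in>C. cball c \<nu>)"
      unfolding covering_number_def by (rule LeastI_ex)
    then show ?thesis using that by blast
  qed
  define K0 where "K0 = card C"
  have "C \<noteq> {}" using C(4) Sne by auto
  then have K0: "K0 \<ge> 1" unfolding K0_def using C(2) by (simp add: Suc_leI card_gt_0_iff)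
  define s where "s = sqrt 3 * \<tau> / sqrt (real N) * sqrt (real K0)"
  have s: "s > 0" using tau N K0 by (simp add: s_def)
  have s2: "s\<^sup>2 = 3 * \<tau>\<^sup>2 * real K0 / real N"
    by (simp add: s_def power_mult_distrib power_divide)

  have "\<forall>n::nat. \<exists>C. finite C \<and> C \<subseteq> S \<and> S \<subseteq> (\<Union>c\<in>C. cball c (inverse (real (Suc n))))"
    using nets by simp
  then obtain net where net: "\<And>n. finite (net n) \<and> net n \<subseteq> S \<and> S \<subseteq> (\<Union>c\<in>net n. cball c (inverse (real (Suc n))))"
    by metis
  define D where "D = (\<Union>n. net n)"
  have Dc: "countable D" unfolding D_def using net by (intro countable_UN) (auto intro: countable_finite)
  have DS: "D \<subseteq> S" unfolding D_def using net by blast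
  have dense: "\<exists>a. (\<forall>n. a n \<in> D) \<and> a \<longlonglongrightarrow> w" if w: "w \<in> S" for w
  proof -
    have "\<exists>c. c \<in> net n \<and> dist c w \<le> inverse (real (Suc n))" for n
    proof -
      from net[of n] w have "w \<in> (\<Union>x\<in>net n. cball x (inverse (real (Suc n))))" by blast
      then obtain x where "x \<in> net n" "w \<in> cball x (inverse (real (Suc n)))" by blast
      then show ?thesis by (auto simp only: mem_cball)
    qed
    then obtain a where a: "\<And>n. a n \<in> net n \<and> dist (a n) w \<le> inverse (real (Suc n))" by metis
    have "(\<lambda>n. dist (a n) w) \<longlonglongrightarrow> 0"
      by (rule Lim_null_comparison[OF _ LIMSEQ_inverse_real_of_nat]) (use a in simp)
    then have "a \<longlonglongrightarrow> w" by (rule tendsto_dist_iff[THEN iffD2])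
    moreover have "\<forall>n. a n \<in> D" using a unfolding D_def by blast
    ultimately show ?thesis by blast
  qed

  define K where "K = (\<lambda>\<theta>. SUP p\<in>D \<times> D. ennreal (norm (G (fst p) \<theta> - G (snd p) \<theta>) / norm (fst p - snd p)))"
  have Km[measurable]: "K \<in> borel_measurable \<mu>"
    unfolding K_def
  proof (rule borel_measurable_SUP)
    show "countable (D \<times> D)" using Dc by simp
    fix p assume p: "p \<in> D \<times> D"
    then have "fst p \<in> S" "snd p \<in> S" using DS by auto
    note [measurable] = GmS[OF this(1)] GmS[OF this(2)]
    show "(\<lambda>\<theta>. ennreal (norm (G (fst p) \<theta> - G (snd p) \<theta>) / norm (fst p - snd p))) \<in> borel_measurable \<mu>"
      by measurable
  qed
  have KL: "K \<theta> \<le> ennreal (LG \<theta>)" if th: "\<theta> \<in> space \<mu>" for \<theta>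
    unfolding K_def
  proof (rule SUP_least)
    fix p assume p: "p \<in> D \<times> D"
    then have pS: "fst p \<in> S" "snd p \<in> S" using DS by auto
    have "norm (G (fst p) \<theta> - G (snd p) \<theta>) / norm (fst p - snd p) \<le> LG \<theta>"
    proof (cases "fst p = snd p")
      case True then show ?thesis using LG_nonneg[OF th] by simp
    next
      case False
      then have "norm (fst p - snd p) > 0" by simp
      then show ?thesis using lipS[OF th pS] by (simp add: divide_le_eq)
    qed
    then show "ennreal (norm (G (fst p) \<theta> - G (snd p) \<theta>) / norm (fst p - snd p)) \<le> ennreal (LG \<theta>)"
      by (rule ennreal_leI)
  qed
  define Kr where "Kr = (\<lambda>\<theta>. enn2real (K \<theta>))"
  have Krm[measurable]: "Kr \<in> borel_measurable \<mu>" unfolding Kr_def by measurable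
  have Kr0: "\<And>\<theta>. 0 \<le> Kr \<theta>" unfolding Kr_def by simp
  have KrL: "Kr \<theta> \<le> LG \<theta>" if th: "\<theta> \<in> space \<mu>" for \<theta>
    unfolding Kr_def using KL[OF th] LG_nonneg[OF th] by (intro enn2real_leI)
  have KD: "norm (G a \<theta> - G b \<theta>) \<le> Kr \<theta> * norm (a - b)"
    if th: "\<theta> \<in> space \<mu>" and ab: "a \<in> D" "b \<in> D" for \<theta> a b
  proof (cases "a = b")
    case True then show ?thesis by simp
  next
    case False
    have Kfin: "K \<theta> < top" using KL[OF th] by (simp add: le_less_trans)
    have "ennreal (norm (G a \<theta> - G b \<theta>) / norm (a - b)) \<le> K \<theta>"
      unfolding K_def using ab by (intro SUP_upper2[of "(a,b)"]) auto
    also have "\<dots> = ennreal (Kr \<theta>)" unfolding Kr_def using Kfin by simp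
    finally have "norm (G a \<theta> - G b \<theta>) / norm (a - b) \<le> Kr \<theta>"
      using Kr0 by (simp add: ennreal_le_iff)
    moreover have "norm (a - b) > 0" using False by simp
    ultimately show ?thesis by (simp add: divide_le_eq)
  qed
  have lip: "norm (G w \<theta> - G w' \<theta>) \<le> Kr \<theta> * norm (w - w')"
    if th: "\<theta> \<in> space \<mu>" and ww: "w \<in> S" "w' \<in> S" for \<theta> w w'
  proof -
    obtain a where a: "\<And>n. a n \<in> D" "a \<longlonglongrightarrow> w" using dense[OF ww(1)] by blast
    obtain b where b: "\<And>n. b n \<in> D" "b \<longlonglongrightarrow> w'" using dense[OF ww(2)] by blast
    have ca: "(\<lambda>n. G (a n) \<theta>) \<longlonglongrightarrow> G w \<theta>"
      using a(1) DS by (intro continuous_on_tendsto_compose[OF G_cont[OF th, folded S_def] a(2) ww(1)] always_eventually) auto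
    have cb: "(\<lambda>n. G (b n) \<theta>) \<longlonglongrightarrow> G w' \<theta>"
      using b(1) DS by (intro continuous_on_tendsto_compose[OF G_cont[OF th, folded S_def] b(2) ww(2)] always_eventually) auto
    have l1: "(\<lambda>n. norm (G (a n) \<theta> - G (b n) \<theta>)) \<longlonglongrightarrow> norm (G w \<theta> - G w' \<theta>)"
      by (intro tendsto_intros ca cb)
    have l2: "(\<lambda>n. Kr \<theta> * norm (a n - b n)) \<longlonglongrightarrow> Kr \<theta> * norm (w - w')"
      by (intro tendsto_intros a(2) b(2))
    show ?thesis
      by (rule LIMSEQ_le[OF l1 l2]) (use KD[OF th a(1) b(1)] in blast)
  qed

  have LGi: "integrable P (\<lambda>\<omega>. LG (\<zeta> \<omega>))" by (rule LG_int)
  have KrI: "integrable P (\<lambda>\<omega>. Kr (\<zeta> \<omega>))"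
  proof (rule Bochner_Integration.integrable_bound[OF LGi])
    show "(\<lambda>\<omega>. Kr (\<zeta> \<omega>)) \<in> borel_measurable P" using zeta by measurable
    show "AE \<omega> in P. norm (Kr (\<zeta> \<omega>)) \<le> norm (LG (\<zeta> \<omega>))"
      using zsp KrL Kr0 by (intro AE_I2) fastforce
  qed
  have KrLe: "(\<integral>\<omega>. Kr (\<zeta> \<omega>) \<partial>P) \<le> L"
    unfolding L_def using zsp KrL by (intro integral_mono[OF KrI LGi]) auto
  have KrIi: "integrable P (\<lambda>\<omega>. Kr (\<zeta>s i \<omega>))" for i
    using transfer_real(1)[OF zetas zeta _ Krm] zetas_dist KrI by simp
  have KrIe: "(\<integral>\<omega>. Kr (\<zeta>s i \<omega>) \<partial>P) \<le> L" for i
    using transfer_real(2)[OF zetas zeta _ Krm] zetas_dist KrLe by simp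
  have L0: "0 \<le> L" unfolding L_def using zsp LG_nonneg by (intro Bochner_Integration.integral_nonneg) auto

  have glip: "norm (g w - g c) \<le> L * norm (w - c)" if wc: "w \<in> S" "c \<in> S" for w c
  proof -
    have "g w - g c = (\<integral>\<omega>. G w (\<zeta> \<omega>) - G c (\<zeta> \<omega>) \<partial>P)"
      unfolding g_def using GiS[OF wc(1)] GiS[OF wc(2)] by simp
    then have "ennreal (norm (g w - g c)) = ennreal (norm (\<integral>\<omega>. G w (\<zeta> \<omega>) - G c (\<zeta> \<omega>) \<partial>P))"
      by (simp only:)
    also have "\<dots> \<le> (\<integral>\<^sup>+\<omega>. ennreal (norm (G w (\<zeta> \<omega>) - G c (\<zeta> \<omega>))) \<partial>P)"
      by (rule integral_norm_bound_ennreal) (intro Bochner_Integration.integrable_diff GiS wc)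
    also have "\<dots> \<le> (\<integral>\<^sup>+\<omega>. ennreal (LG (\<zeta> \<omega>) * norm (w - c)) \<partial>P)"
      using lipS[OF zsp wc] by (intro nn_integral_mono ennreal_leI) auto
    also have "\<dots> = ennreal (\<integral>\<omega>. LG (\<zeta> \<omega>) * norm (w - c) \<partial>P)"
      using LGi zsp LG_nonneg by (intro nn_integral_eq_integral) auto
    also have "\<dots> = ennreal (L * norm (w - c))" unfolding L_def by simp
    finally show ?thesis using L0 by (simp add: ennreal_le_iff)
  qed
  have ghlip: "norm (gh c \<omega> - gh w \<omega>) \<le> (\<Sum>i=1..N. Kr (\<zeta>s i \<omega>)) * norm (c - w) / real N"
    if om: "\<omega> \<in> space P" and wc: "w \<in> S" "c \<in> S" for w c \<omega>
  proof -
    have "gh c \<omega> - gh w \<omega> = (\<Sum>i=1..N. G c (\<zeta>s i \<omega>) - G w (\<zeta>s i \<omega>)) /\<^sub>R real N"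
      unfolding gh_def by (simp add: sum_subtractf scaleR_diff_right)
    then have "norm (gh c \<omega> - gh w \<omega>) = norm (\<Sum>i=1..N. G c (\<zeta>s i \<omega>) - G w (\<zeta>s i \<omega>)) / real N"
      by (simp add: divide_inverse_commute)
    also have "\<dots> \<le> (\<Sum>i=1..N. norm (G c (\<zeta>s i \<omega>) - G w (\<zeta>s i \<omega>))) / real N"
      by (intro divide_right_mono norm_sum) simp
    also have "\<dots> \<le> (\<Sum>i=1..N. Kr (\<zeta>s i \<omega>) * norm (c - w)) / real N"
      by (intro divide_right_mono sum_mono lip zssp om wc) simp
    also have "\<dots> = (\<Sum>i=1..N. Kr (\<zeta>s i \<omega>)) * norm (c - w) / real N"
      by (simp add: sum_distrib_right)
    finally show ?thesis .
  qed

  have var: "integrable P (\<lambda>\<omega>. (X c \<omega>)\<^sup>2) \<and> (\<integral>\<omega>. (X c \<omega>)\<^sup>2 \<partial>P) \<le> 3 * \<tau>\<^sup>2 / real N"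
    if c: "c \<in> S" for c
  proof -
    define m where "m = g c"
    define u where "u = (\<lambda>\<theta>. G c \<theta> - m)"
    note Gcm[measurable] = GmS[OF c]
    have um[measurable]: "u \<in> borel_measurable \<mu>" unfolding u_def by measurable
    have Gi: "integrable P (\<lambda>\<omega>. G c (\<zeta> \<omega>))" by (rule GiS[OF c])
    have ui: "integrable P (\<lambda>\<omega>. u (\<zeta> \<omega>))" unfolding u_def
      using Gi by (intro Bochner_Integration.integrable_diff) auto
    have uz[measurable]: "(\<lambda>\<omega>. u (\<zeta> \<omega>)) \<in> borel_measurable P" by (rule measurable_compose[OF zeta um])
    have em: "(\<lambda>\<omega>. ennreal (exp ((norm (u (\<zeta> \<omega>)))\<^sup>2 / \<tau>\<^sup>2))) \<in> borel_measurable P"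
    proof -
      have "(\<lambda>\<omega>. (norm (u (\<zeta> \<omega>)))\<^sup>2 / \<tau>\<^sup>2) \<in> borel_measurable P"
        using uz by (intro borel_measurable_divide borel_measurable_power borel_measurable_norm) simp_all
      then show ?thesis by measurable
    qed
    have sg: "(\<integral>\<^sup>+\<omega>. ennreal (exp ((norm (u (\<zeta> \<omega>)))\<^sup>2 / \<tau>\<^sup>2)) \<partial>P) \<le> ennreal (exp 1)"
      using G_subgauss[of c] c unfolding S_def u_def m_def g_def by simp
    have "(\<integral>\<^sup>+\<omega>. ennreal ((norm (u (\<zeta> \<omega>)))\<^sup>2) \<partial>P)
        \<le> (\<integral>\<^sup>+\<omega>. ennreal (\<tau>\<^sup>2) * ennreal (exp ((norm (u (\<zeta> \<omega>)))\<^sup>2 / \<tau>\<^sup>2)) \<partial>P)"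
    proof (rule nn_integral_mono)
      fix \<omega>
      define y where "y = (norm (u (\<zeta> \<omega>)))\<^sup>2 / \<tau>\<^sup>2"
      have "y \<le> exp y" using exp_ge_add_one_self[of y] by linarith
      then have "\<tau>\<^sup>2 * y \<le> \<tau>\<^sup>2 * exp y" by (simp add: mult_left_mono)
      moreover have "\<tau>\<^sup>2 * y = (norm (u (\<zeta> \<omega>)))\<^sup>2" unfolding y_def using tau by simp
      ultimately show "ennreal ((norm (u (\<zeta> \<omega>)))\<^sup>2) \<le> ennreal (\<tau>\<^sup>2) * ennreal (exp ((norm (u (\<zeta> \<omega>)))\<^sup>2 / \<tau>\<^sup>2))"
        by (simp add: y_def ennreal_mult[symmetric] ennreal_leI)
    qed
    also have "\<dots> = ennreal (\<tau>\<^sup>2) * (\<integral>\<^sup>+\<omega>. ennreal (exp ((norm (u (\<zeta> \<omega>)))\<^sup>2 / \<tau>\<^sup>2)) \<partial>P)"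
      by (intro nn_integral_cmult[where f="\<lambda>\<omega>. ennreal (exp ((norm (u (\<zeta> \<omega>)))\<^sup>2 / \<tau>\<^sup>2))"] em)
    also have "\<dots> \<le> ennreal (\<tau>\<^sup>2) * ennreal (exp 1)"
      by (intro mult_left_mono sg) simp
    also have "\<dots> = ennreal (\<tau>\<^sup>2 * exp 1)" by (simp add: ennreal_mult)
    finally have u2: "(\<integral>\<^sup>+\<omega>. ennreal ((norm (u (\<zeta> \<omega>)))\<^sup>2) \<partial>P) \<le> ennreal (\<tau>\<^sup>2 * exp 1)" .
    have u2i: "integrable P (\<lambda>\<omega>. (norm (u (\<zeta> \<omega>)))\<^sup>2)"
    proof (rule integrableI_nonneg)
      show "(\<lambda>\<omega>. (norm (u (\<zeta> \<omega>)))\<^sup>2) \<in> borel_measurable P" using zeta by measurable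
      show "AE \<omega> in P. 0 \<le> (norm (u (\<zeta> \<omega>)))\<^sup>2" by simp
      show "(\<integral>\<^sup>+\<omega>. ennreal ((norm (u (\<zeta> \<omega>)))\<^sup>2) \<partial>P) < \<infinity>"
        using u2 by (simp add: le_less_trans)
    qed
    have "ennreal (\<integral>\<omega>. (norm (u (\<zeta> \<omega>)))\<^sup>2 \<partial>P) \<le> ennreal (\<tau>\<^sup>2 * exp 1)"
      using u2 nn_integral_eq_integral[OF u2i] by simp
    then have "(\<integral>\<omega>. (norm (u (\<zeta> \<omega>)))\<^sup>2 \<partial>P) \<le> \<tau>\<^sup>2 * exp 1"
      by (simp add: ennreal_le_iff)
    also have "\<dots> \<le> \<tau>\<^sup>2 * 3" using exp_le by (intro mult_left_mono) auto
    finally have u2b: "(\<integral>\<omega>. (norm (u (\<zeta> \<omega>)))\<^sup>2 \<partial>P) \<le> 3 * \<tau>\<^sup>2" by simp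
    have hm: "(\<lambda>\<theta>. (norm (u \<theta>))\<^sup>2) \<in> borel_measurable \<mu>" by measurable
    have u2ii: "integrable P (\<lambda>\<omega>. (norm (u (\<zeta>s i \<omega>)))\<^sup>2)" for i
      using transfer_real(1)[OF zetas zeta _ hm] zetas_dist u2i by simp
    have u2ie: "(\<integral>\<omega>. (norm (u (\<zeta>s i \<omega>)))\<^sup>2 \<partial>P) \<le> 3 * \<tau>\<^sup>2" for i
      using transfer_real(2)[OF zetas zeta _ hm] zetas_dist u2b by simp
    have nui: "integrable \<mu> (\<lambda>x. norm (u x))"
    proof -
      have "integrable P (\<lambda>\<omega>. norm (u (\<zeta> \<omega>)))" by (rule integrable_norm_h[OF ui])
      then show ?thesis using integrable_distr_eq[OF zeta, of "\<lambda>x. norm (u x)"] zeta_law by simp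
    qed
    have cent: "(\<integral>x. inner a (u x) \<partial>\<mu>) = 0" for a
    proof -
      have "(\<integral>x. inner a (u x) \<partial>\<mu>) = (\<integral>\<omega>. inner a (u (\<zeta> \<omega>)) \<partial>P)"
        using integral_distr[OF zeta, of "\<lambda>x. inner a (u x)"] zeta_law by simp
      also have "\<dots> = (\<integral>\<omega>. inner a (G c (\<zeta> \<omega>)) - inner a m \<partial>P)"
        unfolding u_def by (simp add: inner_diff_right)
      also have "\<dots> = (\<integral>\<omega>. inner a (G c (\<zeta> \<omega>)) \<partial>P) - inner a m"
        using Gi by (subst Bochner_Integration.integral_diff) (auto simp: P.prob_space)
      also have "\<dots> = 0" using Gi by (simp add: m_def g_def)
      finally show ?thesis .
    qed
    define Z where "Z = (\<lambda>i \<omega>. u (\<zeta>s i \<omega>))"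
    have vs: "integrable P (\<lambda>\<omega>. (norm (\<Sum>i\<in>{1..N}. Z i \<omega>))\<^sup>2)
       \<and> (\<integral>\<omega>. (norm (\<Sum>i\<in>{1..N}. Z i \<omega>))\<^sup>2 \<partial>P) = (\<Sum>i\<in>{1..N}. \<integral>\<omega>. (norm (Z i \<omega>))\<^sup>2 \<partial>P)"
    proof (rule var_sum)
      show "finite {1..N}" by simp
      show "Z i \<in> borel_measurable P" for i unfolding Z_def using zetas[of i] by measurable
      show "integrable P (\<lambda>\<omega>. (norm (Z i \<omega>))\<^sup>2)" for i unfolding Z_def by (rule u2ii)
      fix i j assume ij: "i \<in> {1..N}" "j \<in> {1..N}" "i \<noteq> j"
      have ind: "prob_space.indep_var P \<mu> (\<zeta>s i) \<mu> (\<zeta>s j)"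
        using ij by (intro indep_pair[OF P(1) zetas_indep]) auto
      show "(\<integral>\<omega>. inner (Z i \<omega>) (Z j \<omega>) \<partial>P) = 0" unfolding Z_def
        by (rule indep_orth[OF P(1) mu(1) zetas zetas ind law law um nui cent])
    qed
    have Xeq: "X c \<omega> = norm (\<Sum>i\<in>{1..N}. Z i \<omega>) / real N" for \<omega>
    proof -
      have "(\<Sum>i\<in>{1..N}. Z i \<omega>) = (\<Sum>i=1..N. G c (\<zeta>s i \<omega>)) - real N *\<^sub>R m"
        unfolding Z_def u_def by (simp add: sum_subtractf sum_constant_scaleR)
      then have "g c - gh c \<omega> = - ((\<Sum>i\<in>{1..N}. Z i \<omega>) /\<^sub>R real N)"
        unfolding gh_def m_def using N by (simp add: scaleR_diff_right)
      then show ?thesis unfolding X_def by (simp add: divide_inverse_commute)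
    qed
    have X2: "(X c \<omega>)\<^sup>2 = (norm (\<Sum>i\<in>{1..N}. Z i \<omega>))\<^sup>2 / (real N)\<^sup>2" for \<omega>
      unfolding Xeq by (simp add: power_divide)
    have "integrable P (\<lambda>\<omega>. (X c \<omega>)\<^sup>2)" unfolding X2 using vs by simp
    moreover have "(\<integral>\<omega>. (X c \<omega>)\<^sup>2 \<partial>P) \<le> 3 * \<tau>\<^sup>2 / real N"
    proof -
      have "(\<integral>\<omega>. (X c \<omega>)\<^sup>2 \<partial>P) = (\<Sum>i\<in>{1..N}. \<integral>\<omega>. (norm (Z i \<omega>))\<^sup>2 \<partial>P) / (real N)\<^sup>2"
        unfolding X2 using vs by simp
      also have "\<dots> \<le> (\<Sum>i\<in>{1..N}. 3 * \<tau>\<^sup>2) / (real N)\<^sup>2"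
        unfolding Z_def by (intro divide_right_mono sum_mono u2ie) simp
      also have "\<dots> = 3 * \<tau>\<^sup>2 / real N" using N by (simp add: power2_eq_square)
      finally show ?thesis .
    qed
    ultimately show ?thesis by blast
  qed

  define R where "R = (\<lambda>\<omega>. L * \<nu> + (\<nu> / real N) * (\<Sum>i=1..N. Kr (\<zeta>s i \<omega>))
                          + (1 / (2 * s)) * ((\<Sum>c\<in>C. (X c \<omega>)\<^sup>2) + s\<^sup>2))"
  have pw: "X w \<omega> \<le> R \<omega>" if om: "\<omega> \<in> space P" and w: "w \<in> S" for w \<omega>
  proof -
    obtain c where c: "c \<in> C" "dist c w \<le> \<nu>" using C(4) w by auto
    have cS: "c \<in> S" using c(1) C(1) by auto
    have d: "norm (w - c) \<le> \<nu>" using c(2) by (simp add: dist_norm norm_minus_commute)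
    have A: "norm (g w - g c) \<le> L * \<nu>"
      using glip[OF w cS] mult_left_mono[OF d L0] by linarith
    have sK: "0 \<le> (\<Sum>i=1..N. Kr (\<zeta>s i \<omega>))" using Kr0 by (simp add: sum_nonneg)
    have "norm (gh c \<omega> - gh w \<omega>) \<le> (\<Sum>i=1..N. Kr (\<zeta>s i \<omega>)) * norm (c - w) / real N"
      by (rule ghlip[OF om w cS])
    also have "\<dots> \<le> (\<Sum>i=1..N. Kr (\<zeta>s i \<omega>)) * \<nu> / real N"
      using d sK by (intro divide_right_mono mult_left_mono) (simp_all add: norm_minus_commute)
    finally have Bq: "norm (gh c \<omega> - gh w \<omega>) \<le> (\<nu> / real N) * (\<Sum>i=1..N. Kr (\<zeta>s i \<omega>))"
      by (simp add: field_simps)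
    have x1: "X c \<omega> \<le> (1 / (2 * s)) * ((X c \<omega>)\<^sup>2 + s\<^sup>2)"
    proof -
      have "0 \<le> (X c \<omega> - s)\<^sup>2" by simp
      then have "2 * s * X c \<omega> \<le> (X c \<omega>)\<^sup>2 + s\<^sup>2" by (simp add: power2_diff mult.commute mult.left_commute)
      then show ?thesis using s by (simp add: field_simps)
    qed
    have x2: "(X c \<omega>)\<^sup>2 \<le> (\<Sum>c\<in>C. (X c \<omega>)\<^sup>2)"
      using c(1) C(2) by (intro member_le_sum) auto
    have Cq: "X c \<omega> \<le> (1 / (2 * s)) * ((\<Sum>c\<in>C. (X c \<omega>)\<^sup>2) + s\<^sup>2)"
      using x1 x2 s by (smt (verit) divide_pos_pos mult_left_mono)
    have eq: "g w - gh w \<omega> = (g w - g c) + (g c - gh c \<omega>) + (gh c \<omega> - gh w \<omega>)" by simp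
    have "X w \<omega> \<le> norm (g w - g c) + X c \<omega> + norm (gh c \<omega> - gh w \<omega>)"
      unfolding X_def eq
      using norm_triangle_ineq[of "(g w - g c) + (g c - gh c \<omega>)" "gh c \<omega> - gh w \<omega>"]
            norm_triangle_ineq[of "g w - g c" "g c - gh c \<omega>"] by linarith
    then show ?thesis unfolding R_def using A Bq Cq by linarith
  qed
  have R0: "0 \<le> R \<omega>" for \<omega>
    unfolding R_def using L0 nu N s Kr0
    by (intro add_nonneg_nonneg mult_nonneg_nonneg sum_nonneg) auto
  have XI: "\<And>c. c \<in> C \<Longrightarrow> integrable P (\<lambda>\<omega>. (X c \<omega>)\<^sup>2)" using var C(1) by blast
  have XIe: "\<And>c. c \<in> C \<Longrightarrow> (\<integral>\<omega>. (X c \<omega>)\<^sup>2 \<partial>P) \<le> 3 * \<tau>\<^sup>2 / real N" using var C(1) by blast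
  have I1: "integrable P (\<lambda>\<omega>. \<Sum>i=1..N. Kr (\<zeta>s i \<omega>))"
    by (rule Bochner_Integration.integrable_sum) (rule KrIi)
  have I2: "integrable P (\<lambda>\<omega>. \<Sum>c\<in>C. (X c \<omega>)\<^sup>2)"
    by (rule Bochner_Integration.integrable_sum) (rule XI)
  have Ri: "integrable P R" unfolding R_def using I1 I2 by simp
  have IR: "(\<integral>\<omega>. R \<omega> \<partial>P) = L * \<nu> + (\<nu> / real N) * (\<Sum>i=1..N. \<integral>\<omega>. Kr (\<zeta>s i \<omega>) \<partial>P)
                          + (1 / (2 * s)) * ((\<Sum>c\<in>C. \<integral>\<omega>. (X c \<omega>)\<^sup>2 \<partial>P) + s\<^sup>2)"
    unfolding R_def using I1 I2 KrIi XI
    by (simp add: Bochner_Integration.integral_sum P.prob_space)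
  have "(\<Sum>i=1..N. \<integral>\<omega>. Kr (\<zeta>s i \<omega>) \<partial>P) \<le> (\<Sum>i=1..N. L)"
    by (intro sum_mono KrIe)
  then have b1: "(\<nu> / real N) * (\<Sum>i=1..N. \<integral>\<omega>. Kr (\<zeta>s i \<omega>) \<partial>P) \<le> (\<nu> / real N) * (real N * L)"
    using nu N by (intro mult_left_mono) auto
  have "(\<Sum>c\<in>C. \<integral>\<omega>. (X c \<omega>)\<^sup>2 \<partial>P) \<le> (\<Sum>c\<in>C. 3 * \<tau>\<^sup>2 / real N)"
    by (intro sum_mono XIe)
  then have b2: "(1 / (2 * s)) * ((\<Sum>c\<in>C. \<integral>\<omega>. (X c \<omega>)\<^sup>2 \<partial>P) + s\<^sup>2)
        \<le> (1 / (2 * s)) * (real K0 * (3 * \<tau>\<^sup>2 / real N) + s\<^sup>2)"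
    using s unfolding K0_def by (intro mult_left_mono) auto
  have b3: "(1 / (2 * s)) * (real K0 * (3 * \<tau>\<^sup>2 / real N) + s\<^sup>2) = s"
  proof -
    have b3a: "real K0 * (3 * \<tau>\<^sup>2 / real N) = s\<^sup>2" unfolding s2 by simp
    show ?thesis unfolding b3a using s by (simp add: power2_eq_square field_simps)
  qed
  have b4: "(\<nu> / real N) * (real N * L) = L * \<nu>" using N by simp
  have IRb: "(\<integral>\<omega>. R \<omega> \<partial>P) \<le> 2 * L * \<nu> + s"
    unfolding IR using b1 b2 b3 b4 by linarith
  have part2: "(\<integral>\<^sup>+\<omega>. (SUP w\<in>S. ennreal (X w \<omega>)) \<partial>P) \<le> ennreal (2 * L * \<nu> + s)"
  proof -
    have "(\<integral>\<^sup>+\<omega>. (SUP w\<in>S. ennreal (X w \<omega>)) \<partial>P) \<le> (\<integral>\<^sup>+\<omega>. ennreal (R \<omega>) \<partial>P)"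
      by (intro nn_integral_mono SUP_least ennreal_leI pw)
    also have "\<dots> = ennreal (\<integral>\<omega>. R \<omega> \<partial>P)"
      using Ri R0 by (intro nn_integral_eq_integral) auto
    also have "\<dots> \<le> ennreal (2 * L * \<nu> + s)" using IRb by (rule ennreal_leI)
    finally show ?thesis .
  qed
  have e: "s = sqrt 3 * \<tau> / sqrt (real N) * sqrt (real (covering_number \<nu> (B ` V0)))"
    using C(3) unfolding s_def K0_def S_def by simp
  have eqX: "(SUP w\<in>B ` V0. ennreal (norm ((\<integral>\<omega>'. G w (\<zeta> \<omega>') \<partial>P)
                       - (\<Sum>i=1..N. G w (\<zeta>s i \<omega>)) /\<^sub>R real N))) = (SUP w\<in>S. ennreal (X w \<omega>))" for \<omega>
    unfolding X_def g_def gh_def S_def ..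
  show ?thesis
    using part1 part2 unfolding eqX e L_def by simp
qed

end
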